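(* Let $K_{1,n-1}$ be the star graph with $n$ nodes, with the node of degree $n-1$ labeled $1$. Then the communicability angles satisfy $$\cos^2\theta_{1q}(K_{1,n-1})=\frac{\tanh^2(\sqrt{n-1})}{(n-2)\,\mathrm{sech}(\sqrt{n-1})+1}\quad\text{for } q\neq 1,$$ $$\cos\theta_{pq}(K_{1,n-1})=\frac{\cosh(\sqrt{n-1})-1}{\cosh(\sqrt{n-1})+n-2}\quad\text{for } p\neq1,\ q\neq1,\ p\neq q.$$
   Context: For a graph with adjacency matrix $A$, the communicability is $G_{pq}=(e^{A})_{pq}$ and the communicability angle $\theta_{pq}\in[0^\circ,90^\circ]$ between nodes $p,q$ is defined by $\cos\theta_{pq}=G_{pq}/\sqrt{G_{pp}G_{qq}}$. *)

theory Defs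
  imports "HOL-Analysis.Analysis"
begin

text \<open>Square matrices of size n are represented as functions nat => nat => real,
  with rows/columns indexed by {1..n}.\<close>

definition mat_mul :: "nat \<Rightarrow> (nat \<Rightarrow> nat \<Rightarrow> real) \<Rightarrow> (nat \<Rightarrow> nat \<Rightarrow> real) \<Rightarrow> (nat \<Rightarrow> nat \<Rightarrow> real)" where
  "mat_mul n A B = (\<lambda>i j. \<Sum>k=1..n. A i k * B k j)"

definition mat_id :: "nat \<Rightarrow> nat \<Rightarrow> real" where
  "mat_id = (\<lambda>i j. if i = j then 1 else 0)"

fun mat_pow :: "nat \<Rightarrow> (nat \<Rightarrow> nat \<Rightarrow> real) \<Rightarrow> nat \<Rightarrow> (nat \<Rightarrow> nat \<Rightarrow> real)" where
  "mat_pow n A 0 = mat_id"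
| "mat_pow n A (Suc k) = mat_mul n (mat_pow n A k) A"

definition communicability :: "nat \<Rightarrow> (nat \<Rightarrow> nat \<Rightarrow> real) \<Rightarrow> nat \<Rightarrow> nat \<Rightarrow> real" where
  "communicability n A p q = (\<Sum>k. mat_pow n A k p q / fact k)"

definition comm_angle :: "nat \<Rightarrow> (nat \<Rightarrow> nat \<Rightarrow> real) \<Rightarrow> nat \<Rightarrow> nat \<Rightarrow> real" where
  "comm_angle n A p q = arccos (communicability n A p q /
      sqrt (communicability n A p p * communicability n A q q))"

definition star_adj :: "nat \<Rightarrow> nat \<Rightarrow> real" where
  "star_adj i j = (if (i = 1 \<and> j \<noteq> 1) \<or> (j = 1 \<and> i \<noteq> 1) then 1 else 0)"


definition sech :: "real \<Rightarrow> real" where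
  "sech x = 1 / cosh x"

end

theory Submission imports Defs begin

definition PF :: "nat \<Rightarrow> nat \<Rightarrow> nat \<Rightarrow> nat \<Rightarrow> real" where
 "PF n k i j = (if i = 1 \<and> j = 1 then (if even k then (real n - 1)^(k div 2) else 0)
   else if i = 1 \<or> j = 1 then (if odd k then (real n - 1)^(k div 2) else 0)
   else if k = 0 then (if i = j then 1 else 0)
   else if even k then (real n - 1)^(k div 2 - 1) else 0)"

lemma sum_leaf:
  assumes "n \<ge> 2" "i \<in> {1..n}"
  shows "(\<Sum>l=2..n. PF n k i l) = (if i = 1 then (if odd k then (real n - 1)^(k div 2 + 1) else 0)
      else if k = 0 then 1 else if even k then (real n - 1)^(k div 2) else 0)"
proof (cases "i = 1")
  case True
  then show ?thesis using assms by (simp add: PF_def power_commutes of_nat_diff)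
next
  case False
  show ?thesis
  proof (cases "k = 0")
    case True
    have "(\<Sum>l=2..n. PF n k i l) = (\<Sum>l=2..n. if l = i then 1 else 0)"
      using False True by (intro sum.cong) (auto simp: PF_def)
    also have "\<dots> = 1" using assms False by (simp add: sum.delta)
    finally show ?thesis using False True by simp
  next
    case k: False
    have "(\<Sum>l=2..n. PF n k i l) = (\<Sum>l=2..n. if even k then (real n - 1)^(k div 2 - 1) else 0)"
      using False k by (intro sum.cong) (auto simp: PF_def)
    also have "\<dots> = (if even k then (real n - 1)^(k div 2) else 0)"
    proof -
      have "k div 2 = Suc (k div 2 - 1)" if "even k" using k that by auto
      then have "even k \<Longrightarrow> (real n - 1)^(k div 2) = (real n - 1) * (real n - 1)^(k div 2 - 1)"
        by (simp only: power_Suc[symmetric])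
      then show ?thesis using assms by (auto simp: of_nat_diff)
    qed
    finally show ?thesis using False k by simp
  qed
qed

lemma pow_closed:
  assumes "n \<ge> 2" "i \<in> {1..n}" "j \<in> {1..n}"
  shows "mat_pow n star_adj k i j = PF n k i j"
  using assms(2,3)
proof (induction k arbitrary: j)
  case 0
  then show ?case by (auto simp: PF_def mat_id_def)
next
  case (Suc k)
  have "mat_pow n star_adj (Suc k) i j = (\<Sum>l=1..n. PF n k i l * star_adj l j)"
    using Suc by (simp add: mat_mul_def)
  also have "\<dots> = (if j = 1 then (\<Sum>l=2..n. PF n k i l) else PF n k i 1)"
  proof (cases "j = 1")
    case True
    have "{1..n} = insert 1 {2..n}" using assms by auto
    then have "(\<Sum>l=1..n. PF n k i l * star_adj l j) = (\<Sum>l\<in>insert 1 {2..n}. PF n k i l * star_adj l j)" by simp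
    also have "\<dots> = (\<Sum>l=2..n. PF n k i l)" using True by (simp add: star_adj_def)
    finally show ?thesis using True by simp
  next
    case False
    have "(\<Sum>l=1..n. PF n k i l * star_adj l j) = (\<Sum>l=1..n. if l = 1 then PF n k i l else 0)"
      using False by (intro sum.cong) (auto simp: star_adj_def)
    also have "\<dots> = PF n k i 1" using assms by (simp add: sum.delta)
    finally show ?thesis using False by simp
  qed
  also have "\<dots> = (if j = 1 then (if i = 1 then (if odd k then (real n - 1)^(k div 2 + 1) else 0)
      else if k = 0 then 1 else if even k then (real n - 1)^(k div 2) else 0) else PF n k i 1)"
    using sum_leaf[OF assms(1) Suc.prems(1), of k] by simp
  also have "\<dots> = PF n (Suc k) i j"
    by (auto simp: PF_def)
  finally show ?case .
qed

lemma sqrt_pow_even: "x \<ge> 0 \<Longrightarrow> even k \<Longrightarrow> sqrt x ^ k = x ^ (k div 2)"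
proof -
  assume x: "x \<ge> 0" and "even k"
  then obtain m where k: "k = 2 * m" by (auto elim!: evenE)
  have "sqrt x ^ k = (sqrt x ^ 2) ^ m" by (simp add: k power_mult)
  then show ?thesis using x by (simp add: k)
qed

lemma sqrt_pow_odd: "x \<ge> 0 \<Longrightarrow> odd k \<Longrightarrow> sqrt x ^ k = x ^ (k div 2) * sqrt x"
proof -
  assume x: "x \<ge> 0" and "odd k"
  then obtain m where k: "k = 2 * m + 1" by (auto elim!: oddE)
  have "sqrt x ^ k = (sqrt x ^ 2) ^ m * sqrt x" by (simp add: k power_mult)
  then show ?thesis using x by (simp add: k)
qed

lemma G11:
  assumes "n \<ge> 2"
  shows "communicability n star_adj 1 1 = cosh (sqrt (real n - 1))"
proof -
  have "(\<lambda>k. mat_pow n star_adj k 1 1 / fact k) = (\<lambda>k. if even k then sqrt (real n - 1) ^ k /\<^sub>R fact k else 0)"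
    using assms by (auto simp: pow_closed PF_def sqrt_pow_even divide_inverse_commute)
  then have "(\<lambda>k. mat_pow n star_adj k 1 1 / fact k) sums cosh (sqrt (real n - 1))"
    using cosh_converges[of "sqrt (real n - 1)"] by simp
  then show ?thesis unfolding communicability_def by (rule sums_unique[symmetric])
qed

lemma G1q:
  assumes "n \<ge> 2" "q \<in> {2..n}"
  shows "communicability n star_adj 1 q = sinh (sqrt (real n - 1)) / sqrt (real n - 1)"
proof -
  have s: "sqrt (real n - 1) > 0" using assms by simp
  have "(\<lambda>k. mat_pow n star_adj k 1 q / fact k) = (\<lambda>k. (if even k then 0 else sqrt (real n - 1) ^ k /\<^sub>R fact k) / sqrt (real n - 1))"
    using assms s by (auto simp: pow_closed PF_def sqrt_pow_odd divide_inverse_commute)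
  moreover have "(\<lambda>k. (if even k then 0 else sqrt (real n - 1) ^ k /\<^sub>R fact k) / sqrt (real n - 1)) sums (sinh (sqrt (real n - 1)) / sqrt (real n - 1))"
    by (intro sums_divide sinh_converges)
  ultimately have "(\<lambda>k. mat_pow n star_adj k 1 q / fact k) sums (sinh (sqrt (real n - 1)) / sqrt (real n - 1))"
    by simp
  then show ?thesis unfolding communicability_def by (rule sums_unique[symmetric])
qed

lemma Gpq:
  assumes "n \<ge> 2" "p \<in> {2..n}" "q \<in> {2..n}"
  shows "communicability n star_adj p q = (cosh (sqrt (real n - 1)) - 1) / (real n - 1) + (if p = q then 1 else 0)"
proof -
  define N where "N = real n - 1"
  have N: "N > 0" using assms by (simp add: N_def)
  have "(\<lambda>k. mat_pow n star_adj k p q / fact k) = (\<lambda>k. (if even k then sqrt N ^ k /\<^sub>R fact k else 0) / N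
     + (if k = 0 then (if p = q then 1 else 0) - 1 / N else 0))"
  proof
    fix k
    show "mat_pow n star_adj k p q / fact k = (if even k then sqrt N ^ k /\<^sub>R fact k else 0) / N
     + (if k = 0 then (if p = q then 1 else 0) - 1 / N else 0)"
    proof (cases "k = 0")
      case True then show ?thesis using assms by (simp add: pow_closed PF_def mat_id_def)
    next
      case False
      then have "even k \<Longrightarrow> N ^ (k div 2) = N * N ^ (k div 2 - 1)"
        by (cases "k div 2") auto
      then show ?thesis
      proof (cases "even k")
        case True
        have m: "mat_pow n star_adj k p q = N ^ (k div 2 - 1)"
          using assms False True by (simp add: pow_closed PF_def N_def)
        have "sqrt N ^ k = N * N ^ (k div 2 - 1)" using True N \<open>even k \<Longrightarrow> _\<close>
          by (simp add: sqrt_pow_even)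
        then show ?thesis using m False True N by (simp add: divide_inverse_commute)
      next
        case odd: False
        have m: "mat_pow n star_adj k p q = 0"
          using assms False odd by (simp add: pow_closed PF_def N_def)
        then show ?thesis using odd False by simp
      qed
    qed
  qed
  moreover have "(\<lambda>k. (if even k then sqrt N ^ k /\<^sub>R fact k else 0) / N
     + (if k = 0 then (if p = q then 1 else 0) - 1 / N else 0)) sums (cosh (sqrt N) / N + ((if p = q then 1 else 0) - 1 / N))"
    by (intro sums_add sums_divide cosh_converges sums_single)
  moreover have "cosh (sqrt N) / N + ((if p = q then 1 else 0) - 1 / N) = (cosh (sqrt N) - 1) / N + (if p = q then 1 else 0)"
    by (simp add: diff_divide_distrib)
  ultimately have "(\<lambda>k. mat_pow n star_adj k p q / fact k) sums ((cosh (sqrt N) - 1) / N + (if p = q then 1 else 0))"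
    by simp
  then show ?thesis unfolding communicability_def N_def by (rule sums_unique[symmetric])
qed

theorem proposition4p3:
  fixes n :: nat
  assumes "n \<ge> 2"
  shows "(\<forall>q\<in>{2..n}. (cos (comm_angle n star_adj 1 q))^2 =
            (tanh (sqrt (real n - 1)))^2 / ((real n - 2) * sech (sqrt (real n - 1)) + 1)) \<and>
         (\<forall>p\<in>{2..n}. \<forall>q\<in>{2..n}. p \<noteq> q \<longrightarrow>
            cos (comm_angle n star_adj p q) =
            (cosh (sqrt (real n - 1)) - 1) / (cosh (sqrt (real n - 1)) + real n - 2))"
proof -
  define s where "s = sqrt (real n - 1)"
  define c where "c = cosh s"
  define h where "h = sinh s"
  have s: "s > 0" using assms by (simp add: s_def)
  have N: "real n - 1 = s^2" using assms by (simp add: s_def)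
  have c1: "c \<ge> 1" by (simp add: c_def cosh_real_ge_1)
  have h: "h > 0" using s by (simp add: h_def)
  have ch: "c^2 = h^2 + 1" by (simp add: c_def h_def cosh_square_eq)
  have n2: "real n - 2 \<ge> 0" using assms by simp
  have Npos: "real n - 1 > 0" using assms by simp
  have Gd: "communicability n star_adj p p = (c + real n - 2) / s^2" if p: "p \<in> {2..n}" for p
  proof -
    have "communicability n star_adj p p = (c - 1) / (real n - 1) + 1"
      using Gpq[OF assms p p] by (simp add: c_def s_def)
    also have "\<dots> = (c - 1) / (real n - 1) + (real n - 1) / (real n - 1)"
      using Npos by simp
    also have "\<dots> = (c - 1 + (real n - 1)) / (real n - 1)"
      by (simp only: add_divide_distrib)
    also have "c - 1 + (real n - 1) = c + real n - 2" by simp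
    finally show ?thesis by (simp only: N)
  qed
  have Go: "communicability n star_adj p q = (c - 1) / s^2" if p: "p \<in> {2..n}" and q: "q \<in> {2..n}" and pq: "p \<noteq> q" for p q
  proof -
    have "communicability n star_adj p q = (c - 1) / (real n - 1)"
      using Gpq[OF assms p q] pq by (simp add: c_def s_def)
    then show ?thesis by (simp only: N)
  qed
  have P1: "(cos (comm_angle n star_adj 1 q))^2 =
            (tanh (sqrt (real n - 1)))^2 / ((real n - 2) * sech (sqrt (real n - 1)) + 1)" if q: "q \<in> {2..n}" for q
  proof -
    have Gqq: "communicability n star_adj q q = (c + real n - 2) / s^2"
      using Gd[OF q] .
    define x where "x = h / sqrt (c * (c + real n - 2))"
    have pos: "c * (c + real n - 2) > 0" using c1 n2 by simp
    have ang: "communicability n star_adj 1 q / sqrt (communicability n star_adj 1 1 * communicability n star_adj q q) = x"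
    proof -
      have "sqrt (c * ((c + real n - 2) / s^2)) = sqrt (c * (c + real n - 2)) / s"
        using s by (simp add: real_sqrt_divide times_divide_eq_right)
      then show ?thesis using G1q[OF assms q] G11[OF assms] Gqq s pos
        by (simp add: x_def c_def h_def s_def[symmetric])
    qed
    have x2: "x^2 = h^2 / (c * (c + real n - 2))" using pos by (simp add: x_def power_divide)
    have x0: "x \<ge> 0" using h pos by (simp add: x_def)
    have cc: "c*c \<le> c*(c + real n - 2)" using c1 n2 by (intro mult_left_mono) auto
    have "h^2 \<le> c*(c + real n - 2)" using cc ch by (simp add: power2_eq_square)
    then have "x^2 \<le> 1" unfolding x2 using pos by (simp add: divide_le_eq_1)
    then have "x \<le> 1" using x0 by (simp add: power_le_one_iff)
    then have "cos (comm_angle n star_adj 1 q) = x" using x0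
      unfolding comm_angle_def ang by (simp add: cos_arccos)
    then have "(cos (comm_angle n star_adj 1 q))^2 = h^2 / (c * (c + real n - 2))" using x2 by simp
    also have "\<dots> = (tanh s)^2 / ((real n - 2) * sech s + 1)"
      using c1 n2 pos by (simp add: tanh_def sech_def c_def h_def power_divide field_simps power2_eq_square)
    finally show ?thesis by (simp add: s_def)
  qed
  have P2: "cos (comm_angle n star_adj p q) = (cosh (sqrt (real n - 1)) - 1) / (cosh (sqrt (real n - 1)) + real n - 2)"
    if p: "p \<in> {2..n}" and q: "q \<in> {2..n}" and pq: "p \<noteq> q" for p q
  proof -
    define x where "x = (c - 1) / (c + real n - 2)"
    have pos: "c + real n - 2 > 0" using c1 n2 by simp
    have "communicability n star_adj p q = (c - 1) / s^2" using Go[OF p q pq] .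
    moreover have "communicability n star_adj p p = (c + real n - 2) / s^2"
      using Gd[OF p] .
    moreover have "communicability n star_adj q q = (c + real n - 2) / s^2"
      using Gd[OF q] .
    ultimately have ang: "communicability n star_adj p q / sqrt (communicability n star_adj p p * communicability n star_adj q q) = x"
    proof -
      assume e1: "communicability n star_adj p q = (c - 1) / s^2"
        and e2: "communicability n star_adj p p = (c + real n - 2) / s^2"
        and e3: "communicability n star_adj q q = (c + real n - 2) / s^2"
      have "sqrt ((c + real n - 2) / s^2 * ((c + real n - 2) / s^2)) = (c + real n - 2) / s^2"
        using pos by (simp only: real_sqrt_abs2) simp
      then have "communicability n star_adj p q / sqrt (communicability n star_adj p p * communicability n star_adj q q)
          = ((c - 1) / s^2) / ((c + real n - 2) / s^2)" by (simp only: e1 e2 e3)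
      also have "\<dots> = x" using s by (simp add: x_def)
      finally show ?thesis .
    qed
    have "x \<ge> 0" "x \<le> 1" using pos c1 n2 by (simp_all add: x_def)
    then show ?thesis using ang by (simp add: comm_angle_def cos_arccos x_def c_def s_def)
  qed
  show ?thesis using P1 P2 by blast
qed

end
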